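(* Let $\Gamma$ be a connected simple graph and $N>2$. Then $\mathrm{Conf}_{\Gamma}(\mathbb{R}^N)$ is $(N-2)$-connected.
   Context: For a simple graph $\Gamma$ with vertex set $\{1,\dots,m\}$, $\mathrm{Conf}_{\Gamma}(X)=\{(x_1,\dots,x_m)\in X^m : x_i\neq x_j \text{ whenever } \{i,j\}\text{ is an edge}\}$. *)

theory Defs
  imports "HOL-Analysis.Analysis"
begin

definition simple_graph :: "('v \<Rightarrow> 'v \<Rightarrow> bool) \<Rightarrow> bool" where
  "simple_graph E \<longleftrightarrow> (\<forall>u v. E u v \<longrightarrow> E v u) \<and> (\<forall>v. \<not> E v v)"

definition connected_graph :: "('v \<Rightarrow> 'v \<Rightarrow> bool) \<Rightarrow> bool" where
  "connected_graph E \<longleftrightarrow> (\<forall>u v. E\<^sup>*\<^sup>* u v)"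

definition Conf :: "('v \<Rightarrow> 'v \<Rightarrow> bool) \<Rightarrow> 'a set \<Rightarrow> ('v \<Rightarrow> 'a) set" where
  "Conf E X = {x. (\<forall>v. x v \<in> X) \<and> (\<forall>u v. E u v \<longrightarrow> x u \<noteq> x v)}"

definition k_connected_space :: "nat \<Rightarrow> 'a topology \<Rightarrow> bool" where
  "k_connected_space k X \<longleftrightarrow> topspace X \<noteq> {} \<and>
     (\<forall>i\<le>k. \<forall>f. continuous_map (nsphere i) X f \<longrightarrow>
        (\<exists>c. homotopic_with (\<lambda>_. True) (nsphere i) X f (\<lambda>_. c)))"

end

theory Submission
  imports Defs "HOL-Homology.Homology"
begin
lemma hom_lemma:
  fixes h :: "real \<times> 'a::topological_space \<Rightarrow> 'b::topological_space"
  assumes "continuous_on ({0..1} \<times> S) h" "h ` ({0..1}\<times>S) \<subseteq> T"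
    "\<forall>x\<in>S. h(0,x) = f x" "\<forall>x\<in>S. h(1,x) = g x"
  shows "homotopic_with_canon (\<lambda>_. True) S T f g"
  using assms by (subst homotopic_with) (auto intro!: exI[of _ h])

lemma finite_pos_bound:
  fixes d :: "'a::finite \<Rightarrow> real"
  assumes "\<And>p. d p > 0"
  shows "\<exists>e>0. \<forall>p. e \<le> d p"
proof (intro exI conjI allI)
  show "0 < Min (range d)" using assms by (simp)
  show "Min (range d) \<le> d p" for p by simp
qed

lemma main_null:
  fixes F :: "real^'n \<Rightarrow> ('v::finite \<Rightarrow> real^'n)"
  assumes S: "compact S" "S \<subseteq> L" "subspace L" "dim L < CARD('n)"
    and loop: "\<And>v. \<not> E v v"
    and contF: "continuous_on S F" and FC: "F ` S \<subseteq> Conf E UNIV"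
  shows "\<exists>c. homotopic_with_canon (\<lambda>_. True) S (Conf E UNIV) F (\<lambda>_. c)"
proof -
  have contFu: "continuous_on S (\<lambda>s. F s u)" for u
    using contF by (rule continuous_on_product_then_coordinatewise)
  have sep: "F s u \<noteq> F s v" if "s \<in> S" "E u v" for s u v
    using FC that unfolding Conf_def by auto
  have "\<exists>d>0. E (fst p) (snd p) \<longrightarrow> (\<forall>s\<in>S. d \<le> norm (F s (fst p) - F s (snd p)))" for p
  proof (cases "S = {} \<or> \<not> E (fst p) (snd p)")
    case True then show ?thesis by (intro exI[of _ 1]) auto
  next
    case False
    have "continuous_on S (\<lambda>s. norm (F s (fst p) - F s (snd p)))"
      by (intro continuous_intros contFu)
    then obtain s0 where s0: "s0 \<in> S" "\<forall>s\<in>S. norm (F s0 (fst p) - F s0 (snd p)) \<le> norm (F s (fst p) - F s (snd p))"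
      using continuous_attains_inf[OF S(1)] False by blast
    show ?thesis
      using s0 sep[of s0 "fst p" "snd p"] False
      by (intro exI[of _ "norm (F s0 (fst p) - F s0 (snd p))"]) auto
  qed
  then obtain d where d: "\<And>p. d p > 0" "\<And>p. E (fst p) (snd p) \<Longrightarrow> \<forall>s\<in>S. d p \<le> norm (F s (fst p) - F s (snd p))"
    by metis
  obtain \<delta> where \<delta>: "\<delta> > 0" "\<And>p. \<delta> \<le> d p" using finite_pos_bound[of d] d(1) by blast
  have \<delta>F: "\<delta> \<le> norm (F s u - F s v)" if "s \<in> S" "E u v" for s u v
    using d(2)[of "(u,v)"] \<delta>(2)[of "(u,v)"] that by force
  have "\<exists>q. polynomial_function q \<and> (\<forall>s\<in>S. norm (F s u - q s) < \<delta>/4)" for u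
    using Stone_Weierstrass_polynomial_function[OF S(1) contFu, of "\<delta>/4"] \<delta> by simp
  then obtain g where g: "\<And>u. polynomial_function (g u)" "\<And>u s. s \<in> S \<Longrightarrow> norm (F s u - g u s) < \<delta>/4"
    by metis
  define D where "D u v = (\<lambda>y. g v y - g u y) ` L" for u v
  have negL: "negligible L" using S(4) by (intro negligible_lowdim) simp
  have negD: "negligible (D u v)" for u v
    unfolding D_def
    by (intro negligible_differentiable_image_negligible[OF order_refl negL]
          differentiable_on_polynomial_function polynomial_function_diff g)
  have "finite W \<longrightarrow> (\<exists>a. (\<forall>u. norm (a u) < \<delta>/4) \<and> (\<forall>u\<in>W. \<forall>v\<in>W. u \<noteq> v \<longrightarrow> a u - a v \<notin> D u v))" for W :: "'v set"
  proof (induction W rule: infinite_finite_induct)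
    case (infinite A) then show ?case by simp
  next
    case empty then show ?case using \<delta> by (intro impI exI[of _ "\<lambda>_. 0"]) simp
  next
    case (insert x W)
    then obtain a where a: "\<forall>u. norm (a u) < \<delta>/4" "\<forall>u\<in>W. \<forall>v\<in>W. u \<noteq> v \<longrightarrow> a u - a v \<notin> D u v"
      by blast
    define Bad where "Bad = (\<Union>v\<in>W. (+) (a v) ` D x v)"
    have "negligible Bad" unfolding Bad_def
      using insert(1) by (intro negligible_Union) (auto intro: negligible_translation negD)
    moreover have "\<not> negligible (ball (0::real^'n) (\<delta>/4))"
      using \<delta> by (intro open_not_negligible) auto
    ultimately have "\<not> ball 0 (\<delta>/4) \<subseteq> Bad" using negligible_subset by blast
    then obtain b0 where b0: "b0 \<in> ball 0 (\<delta>/4)" "b0 \<notin> Bad" by blast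
    then have b: "norm b0 < \<delta>/4" "b0 \<notin> Bad" by auto
    have notin: "b0 - a v \<notin> D x v" if "v \<in> W" for v
    proof
      assume "b0 - a v \<in> D x v"
      then have "b0 \<in> (+) (a v) ` D x v" by (rule rev_image_eqI) simp
      then show False using b(2) that unfolding Bad_def by blast
    qed
    show ?case
    proof (intro impI exI[of _ "a(x := b0)"] conjI ballI allI)
      show "norm ((a(x := b0)) u) < \<delta>/4" for u using a(1) b(1) by simp
      fix u v assume uv: "u \<in> insert x W" "v \<in> insert x W"
        assume "u \<noteq> v"
        then consider "u = x" "v \<in> W" | "v = x" "u \<in> W" | "u \<in> W" "v \<in> W" "u \<noteq> x" "v \<noteq> x"
          using uv insert(2) by blast
        then show "(a(x := b0)) u - (a(x := b0)) v \<notin> D u v"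
        proof cases
          case 1 then show ?thesis using notin insert(2) by auto
        next
          case 2
          show ?thesis
          proof
            assume "(a(x := b0)) u - (a(x := b0)) v \<in> D u v"
            then obtain y where "y \<in> L" "a u - b0 = g x y - g u y"
              using 2 insert(2) unfolding D_def by (cases "u = x") auto
            then have "b0 - a u \<in> D x u" unfolding D_def
              by (intro rev_image_eqI[of y]) (auto simp: algebra_simps)
            then show False using notin 2 by blast
          qed
        next
          case 3 then show ?thesis using a(2) \<open>u \<noteq> v\<close> by auto
        qed
    qed
  qed
  then obtain a where a: "\<And>u. norm (a u) < \<delta>/4" "\<And>u v. u \<noteq> v \<Longrightarrow> a u - a v \<notin> D u v"
    by (metis finite UNIV_I)
  have good: "g u y + a u \<noteq> g v y + a v" if "y \<in> L" "E u v" for y u v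
  proof
    assume eq: "g u y + a u = g v y + a v"
    have "u \<noteq> v" using loop that by blast
    moreover have "a u - a v \<in> D u v" unfolding D_def
      using eq that by (intro rev_image_eqI[of y]) (auto simp: algebra_simps)
    ultimately show False using a(2) by blast
  qed
  have contg: "continuous_on UNIV (g u)" for u
    using g(1) by (simp add: continuous_on_polymonial_function)
  define G where "G s = (\<lambda>u. g u s + a u)" for s
  have H1: "homotopic_with_canon (\<lambda>_. True) S (Conf E UNIV) F G"
  proof (rule hom_lemma[where h="\<lambda>(t,s). (\<lambda>u. (1-t) *\<^sub>R F s u + t *\<^sub>R (g u s + a u))"])
    show "continuous_on ({0..1} \<times> S) (\<lambda>(t,s). (\<lambda>u. (1-t) *\<^sub>R F s u + t *\<^sub>R (g u s + a u)))"
    proof (intro continuous_on_coordinatewise_then_product)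
      fix u
      show "continuous_on ({0..1} \<times> S) (\<lambda>z. (case z of (t,s) \<Rightarrow> (\<lambda>u. (1-t) *\<^sub>R F s u + t *\<^sub>R (g u s + a u))) u)"
        unfolding case_prod_unfold
        by (intro continuous_intros continuous_on_compose2[OF contFu[of u]]
               continuous_on_compose2[OF contg[of u]]) auto
    qed
    show "(\<lambda>(t,s). (\<lambda>u. (1-t) *\<^sub>R F s u + t *\<^sub>R (g u s + a u))) ` ({0..1} \<times> S) \<subseteq> Conf E UNIV"
    proof (clarsimp simp: Conf_def)
      fix t s u v assume ts: "0 \<le> t" "t \<le> (1::real)" "s \<in> S" and E: "E u v"
        and eq: "(1-t) *\<^sub>R F s u + t *\<^sub>R (g u s + a u) = (1-t) *\<^sub>R F s v + t *\<^sub>R (g v s + a v)"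
      define eu where "eu = g u s + a u - F s u"
      define ev where "ev = g v s + a v - F s v"
      have neu: "norm eu < \<delta>/2" unfolding eu_def
        using g(2)[OF ts(3), of u] a(1)[of u] norm_triangle_ineq[of "g u s - F s u" "a u"]
        by (simp add: norm_minus_commute algebra_simps)
      have nev: "norm ev < \<delta>/2" unfolding ev_def
        using g(2)[OF ts(3), of v] a(1)[of v] norm_triangle_ineq[of "g v s - F s v" "a v"]
        by (simp add: norm_minus_commute algebra_simps)
      have "F s u - F s v = t *\<^sub>R (ev - eu)"
        using eq unfolding eu_def ev_def by (simp add: algebra_simps)
      then have "norm (F s u - F s v) = t * norm (ev - eu)" using ts by simp
      also have "\<dots> \<le> norm (ev - eu)" using ts by (simp add: mult_left_le_one_le)
      also have "\<dots> \<le> norm ev + norm eu" by (rule norm_triangle_ineq4)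
      also have "\<dots> < \<delta>" using neu nev by simp
      finally show False using \<delta>F[OF ts(3) E] by simp
    qed
  qed (auto simp: G_def)
  have H2: "homotopic_with_canon (\<lambda>_. True) S (Conf E UNIV) G (\<lambda>_. (\<lambda>u. g u 0 + a u))"
  proof (rule hom_lemma[where h="\<lambda>(t,s). (\<lambda>u. g u ((1-t) *\<^sub>R s) + a u)"])
    show "continuous_on ({0..1} \<times> S) (\<lambda>(t,s). (\<lambda>u. g u ((1-t) *\<^sub>R s) + a u))"
    proof (intro continuous_on_coordinatewise_then_product)
      fix u
      show "continuous_on ({0..1} \<times> S) (\<lambda>z. (case z of (t,s) \<Rightarrow> (\<lambda>u. g u ((1-t) *\<^sub>R s) + a u)) u)"
        unfolding case_prod_unfold
        by (intro continuous_intros continuous_on_compose2[OF contg[of u]]) auto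
    qed
    show "(\<lambda>(t,s). (\<lambda>u. g u ((1-t) *\<^sub>R s) + a u)) ` ({0..1} \<times> S) \<subseteq> Conf E UNIV"
    proof (clarsimp simp: Conf_def)
      fix t s u v assume ts: "0 \<le> t" "t \<le> (1::real)" "s \<in> S" and E: "E u v"
        and eq: "g u ((1-t) *\<^sub>R s) + a u = g v ((1-t) *\<^sub>R s) + a v"
      have "(1-t) *\<^sub>R s \<in> L" using S(2,3) ts(3) by (auto intro: subspace_scale)
      then show False using good[OF _ E] eq by blast
    qed
  qed (auto simp: G_def)
  show ?thesis using homotopic_with_trans[OF H1 H2] by blast
qed

theorem corollary7p3:
  fixes E :: "'v::finite \<Rightarrow> 'v \<Rightarrow> bool"
  assumes "simple_graph E" and "connected_graph E" and "CARD('n::finite) > 2"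
  shows "k_connected_space (CARD('n) - 2)
           (subtopology euclidean (Conf E (UNIV :: (real^'n) set)))"
proof -
  have loop: "\<And>v. \<not> E v v" using assms(1) unfolding simple_graph_def by blast
  let ?C = "Conf E (UNIV :: (real^'n) set)"
  have ne: "?C \<noteq> {}"
  proof -
    have "(\<lambda>v. vec (real (to_nat v)) :: real^'n) \<in> ?C"
      unfolding Conf_def using loop by (auto simp: vec_eq_iff)
    then show ?thesis by blast
  qed
  show ?thesis
    unfolding k_connected_space_def
  proof (intro conjI allI impI)
    show "topspace (subtopology euclidean ?C) \<noteq> {}" using ne by simp
    fix i f
    assume i: "i \<le> CARD('n) - 2" and f: "continuous_map (nsphere i) (subtopology euclidean ?C) f"
    have "Suc i \<le> card (Basis :: (real^'n) set)" using i assms(3) by simp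
    then obtain B :: "(real^'n) set" where B: "B \<subseteq> Basis" "card B = Suc i"
      by (meson obtain_subset_with_card_n)
    have indB: "independent B" using B(1) independent_Basis independent_mono by blast
    have orthB: "pairwise orthogonal B" using B(1) orthogonal_Basis pairwise_subset by blast
    obtain \<phi> \<psi> where hm: "homeomorphic_maps (nsphere (Suc i - 1)) (top_of_set (sphere 0 1 \<inter> span B)) \<phi> \<psi>"
      using homeomorphic_maps_nsphere_euclidean_sphere[OF indB orthB B(2)] B(1)
      by (metis nat.distinct(1) norm_Basis subsetD)
    then have hm: "homeomorphic_maps (nsphere i) (top_of_set (sphere 0 1 \<inter> span B)) \<phi> \<psi>" by simp
    let ?S = "sphere (0::real^'n) 1 \<inter> span B"
    have cF: "continuous_map (top_of_set ?S) (top_of_set ?C) (f \<circ> \<psi>)"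
      using hm f unfolding homeomorphic_maps_def by (meson continuous_map_compose)
    have dimB: "dim (span B) < CARD('n)" using B i assms(3) indB
      by (simp add: dim_eq_card_independent)
    obtain c where hc: "homotopic_with_canon (\<lambda>_. True) ?S ?C (f \<circ> \<psi>) (\<lambda>_. c)"
      using main_null[of ?S "span B" E "f \<circ> \<psi>"] cF loop dimB
      by (auto simp: compact_Int_closed closed_subspace image_subset_iff Pi_iff)
    have "homotopic_with (\<lambda>_. True) (nsphere i) (top_of_set ?C) ((f \<circ> \<psi>) \<circ> \<phi>) ((\<lambda>_. c) \<circ> \<phi>)"
      using homotopic_with_compose_continuous_map_right[OF hc, of "nsphere i" \<phi>] hm
      unfolding homeomorphic_maps_def by auto
    then have "homotopic_with (\<lambda>_. True) (nsphere i) (top_of_set ?C) f (\<lambda>_. c)"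
      by (rule homotopic_with_eq) (use hm in \<open>auto simp: homeomorphic_maps_def\<close>)
    then show "\<exists>c. homotopic_with (\<lambda>_. True) (nsphere i) (subtopology euclidean ?C) f (\<lambda>_. c)"
      by blast
  qed
qed

end
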